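(* Let $n\ge1$ and $\Lambda\in\widetilde{\mathrm{NC}}^{\mathrm D}(n)$. Then $|\Lambda^+|=2n+2-|\Lambda|$ if $-1$ is the greatest element of its block in $\Lambda$, and $|\Lambda^+|=2n-|\Lambda|$ otherwise, where $|\cdot|$ denotes the number of blocks.
   Context: A set partition of a finite set $\mathcal X\subset\mathbb Z$ is a set of nonempty pairwise disjoint sets (blocks) with union $\mathcal X$. A pair $(i,j)$ is an arc of $\Lambda$ if $i<j$ lie in the same block and $j$ is the least element of that block greater than $i$; $\mathrm{Arc}(\Lambda)$ is the set of arcs. Let $[\pm n]=\{\pm1,\dots,\pm n\}$. $\Pi^{\mathrm D}(n)$ is the set of partitions $\Lambda$ of $[\pm n]$ such that $(i,j)\in\mathrm{Arc}(\Lambda)$ iff $(-j,-i)\in\mathrm{Arc}(\Lambda)$, and $\widetilde{\mathrm{NC}}^{\mathrm D}(n)$ is the set of $\Lambda\in\Pi^{\mathrm D}(n)$ such that whenever $(i,k),(j,l)\in\mathrm{Arc}(\Lambda)$ with $i<j<k<l$, we have $(i,k)=(-l,-j)$. For a partition $\Lambda$ of $\mathcal X$, $\Lambda^+$ is the partition of $\mathcal X$ with arc set $(\mathrm{Arc}(\Lambda)\setminus\mathcal S)\cup\mathcal T$, where $\mathcal S=\{(i,i+1):i\in\mathbb Z\}$ and $\mathcal T$ is the set of pairs $(i,i+1)\in\mathcal X\times\mathcal X$ with $i$ maximal in its block of $\Lambda$ and $i+1$ minimal in its block of $\Lambda$ (note $-1$ and $1$ are not of the form $i,i+1$). *)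

theory Defs
  imports Main "HOL-Library.Disjoint_Sets"
begin

definition arcs :: "int set set \<Rightarrow> (int \<times> int) set" where
  "arcs P = {(i, j). \<exists>B\<in>P. i \<in> B \<and> j \<in> B \<and> i < j \<and> (\<forall>k\<in>B. i < k \<longrightarrow> j \<le> k)}"

definition pm :: "nat \<Rightarrow> int set" where
  "pm n = {i. 1 \<le> \<bar>i\<bar> \<and> \<bar>i\<bar> \<le> int n}"

definition PiD :: "nat \<Rightarrow> int set set set" where
  "PiD n = {P. partition_on (pm n) P \<and> (\<forall>i j. (i, j) \<in> arcs P \<longleftrightarrow> (-j, -i) \<in> arcs P)}"

definition NCD :: "nat \<Rightarrow> int set set set" where
  "NCD n = {P \<in> PiD n. \<forall>i j k l. (i, k) \<in> arcs P \<and> (j, l) \<in> arcs P \<and> i < j \<and> j < k \<and> k < l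
              \<longrightarrow> (i, k) = (-l, -j)}"

definition block_of :: "int set set \<Rightarrow> int \<Rightarrow> int set" where
  "block_of P x = (THE B. B \<in> P \<and> x \<in> B)"

definition S_set :: "(int \<times> int) set" where
  "S_set = {(i, i + 1) | i. True}"

definition T_set :: "int set set \<Rightarrow> (int \<times> int) set" where
  "T_set P = {(i, i + 1) | i. i \<in> \<Union>P \<and> i + 1 \<in> \<Union>P
      \<and> (\<forall>x\<in>block_of P i. x \<le> i) \<and> (\<forall>x\<in>block_of P (i + 1). i + 1 \<le> x)}"

definition plus :: "int set set \<Rightarrow> int set set" where
  "plus P = (THE Q. partition_on (\<Union>P) Q \<and> arcs Q = (arcs P - S_set) \<union> T_set P)"

end

theory Submission
  imports Defs
begin

definition ab :: "int set \<Rightarrow> (int \<times> int) set" where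
  "ab B = {(i, j). i \<in> B \<and> j \<in> B \<and> i < j \<and> (\<forall>k\<in>B. i < k \<longrightarrow> j \<le> k)}"

lemma arcs_ab: "arcs P = \<Union>(ab ` P)"
  unfolding arcs_def ab_def by auto

lemma same_block: "partition_on X P \<Longrightarrow> B \<in> P \<Longrightarrow> B' \<in> P \<Longrightarrow> x \<in> B \<Longrightarrow> x \<in> B' \<Longrightarrow> B = B'"
  unfolding partition_on_def disjoint_def by blast

lemma arcs_lt: "(i,j) \<in> arcs P \<Longrightarrow> i < j"
  unfolding arcs_def by auto

lemma arcs_sub: "partition_on X P \<Longrightarrow> (i,j) \<in> arcs P \<Longrightarrow> i \<in> X \<and> j \<in> X"
  unfolding arcs_def partition_on_def by auto

lemma arcs_fun1: "partition_on X P \<Longrightarrow> (i,j) \<in> arcs P \<Longrightarrow> (i,j') \<in> arcs P \<Longrightarrow> j = j'"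
  unfolding arcs_def
  apply clarsimp
  by (metis (no_types, lifting) antisym same_block)

lemma arcs_fun2: "partition_on X P \<Longrightarrow> (i,j) \<in> arcs P \<Longrightarrow> (i',j) \<in> arcs P \<Longrightarrow> i = i'"
  unfolding arcs_def
  apply clarsimp
  by (metis (no_types, lifting) linorder_not_le order_less_le same_block)

lemma arcs_block: "partition_on X P \<Longrightarrow> (i,j) \<in> arcs P \<Longrightarrow> B \<in> P \<Longrightarrow> i \<in> B \<or> j \<in> B \<Longrightarrow> i \<in> B \<and> j \<in> B"
  unfolding arcs_def
  apply clarsimp
  by (metis same_block)

lemma block_sub: "partition_on X P \<Longrightarrow> B \<in> P \<Longrightarrow> B \<subseteq> X"
  unfolding partition_on_def by auto

lemma succ_exists:
  assumes "partition_on X P" "finite X" "B \<in> P" "i \<in> B" "k \<in> B" "i < k"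
  shows "\<exists>j. (i,j) \<in> arcs P \<and> j \<le> k"
proof -
  have fB: "finite B" using finite_subset[OF block_sub[OF assms(1,3)] assms(2)] .
  define S where "S = {k\<in>B. i < k}"
  have fS: "finite S" unfolding S_def using fB by simp
  have nS: "S \<noteq> {}" unfolding S_def using assms(5,6) by blast
  have m1: "Min S \<in> S" using Min_in[OF fS nS] .
  have m2: "\<forall>x\<in>S. Min S \<le> x" using Min_le[OF fS] by blast
  have "Min S \<in> B" "i < Min S" "\<forall>x\<in>B. i < x \<longrightarrow> Min S \<le> x" using m1 m2 unfolding S_def by auto
  then have "(i, Min S) \<in> arcs P" unfolding arcs_def using assms(3,4) by blast
  moreover have "Min S \<le> k" using m2 assms(5,6) unfolding S_def by blast
  ultimately show ?thesis by blast
qed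

lemma pred_exists:
  assumes "partition_on X P" "finite X" "B \<in> P" "i \<in> B" "k \<in> B" "k < i"
  shows "\<exists>j. (j,i) \<in> arcs P \<and> k \<le> j"
proof -
  have fB: "finite B" using finite_subset[OF block_sub[OF assms(1,3)] assms(2)] .
  define S where "S = {k\<in>B. k < i}"
  have fS: "finite S" unfolding S_def using fB by simp
  have nS: "S \<noteq> {}" unfolding S_def using assms(5,6) by blast
  have m1: "Max S \<in> S" using Max_in[OF fS nS] .
  have m2: "\<forall>x\<in>S. x \<le> Max S" using Max_ge[OF fS] by blast
  have "Max S \<in> B" "Max S < i" "\<forall>x\<in>B. Max S < x \<longrightarrow> i \<le> x" using m1 m2 unfolding S_def by force+
  then have "(Max S, i) \<in> arcs P" unfolding arcs_def using assms(3,4) by blast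
  moreover have "k \<le> Max S" using m2 assms(5,6) unfolding S_def by blast
  ultimately show ?thesis by blast
qed

lemma exists_part:
  fixes X :: "int set"
  assumes "finite X"
  shows "A \<subseteq> X \<times> X \<Longrightarrow> (\<forall>(i,j)\<in>A. i<j) \<Longrightarrow> (\<forall>i j j'. (i,j)\<in>A \<longrightarrow> (i,j')\<in>A \<longrightarrow> j=j')
     \<Longrightarrow> (\<forall>i i' j. (i,j)\<in>A \<longrightarrow> (i',j)\<in>A \<longrightarrow> i=i') \<Longrightarrow> \<exists>Q. partition_on X Q \<and> arcs Q = A"
using assms proof (induction X arbitrary: A rule: finite_linorder_max_induct)
  case empty
  then have "A = {}" by auto
  then show ?case by (auto simp: arcs_def partition_on_empty)
next
  case (insert b X)
  define A0 where "A0 = {(i,j)\<in>A. j \<noteq> b}"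
  have bX: "b \<notin> X" using insert by auto
  have "A0 \<subseteq> X \<times> X"
  proof
    fix x assume x: "x \<in> A0"
    obtain i j where ij: "x = (i,j)" by fastforce
    have "(i,j) \<in> A" "j \<noteq> b" using x ij A0_def by auto
    then have "j \<in> X" "i < j" "i \<in> insert b X" using insert.prems by auto
    then show "x \<in> X \<times> X" using ij insert.hyps(2) by auto
  qed
  moreover have "\<forall>(i,j)\<in>A0. i<j" "(\<forall>i j j'. (i,j)\<in>A0 \<longrightarrow> (i,j')\<in>A0 \<longrightarrow> j=j')"
     "(\<forall>i i' j. (i,j)\<in>A0 \<longrightarrow> (i',j)\<in>A0 \<longrightarrow> i=i')" using insert.prems unfolding A0_def by auto
  ultimately obtain Q0 where Q0: "partition_on X Q0" "arcs Q0 = A0" using insert.IH insert.hyps(1) by blast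
  show ?case
  proof (cases "\<exists>p. (p,b) \<in> A")
    case True
    then obtain p where pb: "(p,b) \<in> A" by blast
    have pX: "p \<in> X" using pb insert.prems by auto
    have AA: "A = A0 \<union> {(p,b)}" using pb insert.prems(4) unfolding A0_def by auto
    obtain Bp where Bp: "Bp \<in> Q0" "p \<in> Bp" using Q0(1) pX unfolding partition_on_def by auto
    have BpX: "Bp \<subseteq> X" using Bp Q0(1) block_sub by blast
    have pmax: "\<forall>k\<in>Bp. k \<le> p"
    proof (rule ccontr)
      assume "\<not> (\<forall>k\<in>Bp. k \<le> p)"
      then obtain k where "k \<in> Bp" "p < k" by force
      then obtain j where j: "(p,j) \<in> arcs Q0" using succ_exists[OF Q0(1) insert.hyps(1) Bp] by blast
      then have "(p,j) \<in> A" "j \<noteq> b" using Q0(2) A0_def by auto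
      then show False using pb insert.prems(3) by blast
    qed
    define Q where "Q = insert (insert b Bp) (Q0 - {Bp})"
    have "partition_on (insert b X) Q"
      using Q0(1) Bp bX BpX unfolding Q_def partition_on_def disjoint_def by (auto; blast)
    moreover have "ab (insert b Bp) = ab Bp \<union> {(p,b)}"
      unfolding ab_def using pmax Bp BpX bX insert.hyps(2) by (auto, force+)
    moreover have "arcs Q0 = ab Bp \<union> \<Union>(ab ` (Q0 - {Bp}))" using Bp unfolding arcs_ab by blast
    moreover have "arcs Q = ab (insert b Bp) \<union> \<Union>(ab ` (Q0 - {Bp}))" unfolding Q_def arcs_ab by simp
    ultimately have "partition_on (insert b X) Q \<and> arcs Q = A" using AA Q0(2) by auto
    then show ?thesis by blast
  next
    case False
    then have AA: "A = A0" unfolding A0_def by auto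
    have "partition_on (insert b X) (insert {b} Q0)"
      using Q0(1) bX unfolding partition_on_def disjoint_def by auto
    moreover have "ab {b} = {}" unfolding ab_def by auto
    ultimately show ?thesis using AA Q0(2) unfolding arcs_ab by (intro exI[of _ "insert {b} Q0"]) auto
  qed
qed

definition RR :: "(int \<times> int) set \<Rightarrow> (int \<times> int) set" where
  "RR A = (A \<union> A\<inverse>)\<^sup>*"

lemma RR_sym: "(x,y) \<in> RR A \<Longrightarrow> (y,x) \<in> RR A"
proof -
  assume "(x,y) \<in> RR A"
  then have "(y,x) \<in> ((A \<union> A\<inverse>)\<inverse>)\<^sup>*" unfolding RR_def by (simp add: rtrancl_converse)
  moreover have "(A \<union> A\<inverse>)\<inverse> = A \<union> A\<inverse>" by auto
  ultimately show ?thesis unfolding RR_def by simp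
qed

lemma conn_lt:
  assumes "partition_on X Q" "finite X" "B \<in> Q"
  shows "x \<in> B \<Longrightarrow> y \<in> B \<Longrightarrow> x < y \<Longrightarrow> (x,y) \<in> RR (arcs Q)"
proof (induction "nat (y - x)" arbitrary: x rule: less_induct)
  case less
  obtain j where j: "(x,j) \<in> arcs Q" "j \<le> y" using succ_exists[OF assms less.prems] by blast
  have jB: "j \<in> B" using arcs_block[OF assms(1) j(1) assms(3)] less.prems by blast
  have xj: "x < j" using j arcs_lt by blast
  have s: "(x,j) \<in> RR (arcs Q)" unfolding RR_def using j(1) by blast
  show ?case
  proof (cases "j = y")
    case True then show ?thesis using s by simp
  next
    case False
    then have "(j,y) \<in> RR (arcs Q)" using less.hyps[of j] jB less.prems j xj by auto
    then show ?thesis using s unfolding RR_def by (meson rtrancl_trans)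
  qed
qed

lemma conn:
  assumes "partition_on X Q" "finite X" "B \<in> Q" "x \<in> B" "y \<in> B"
  shows "(x,y) \<in> RR (arcs Q)"
proof -
  consider "x < y" | "x = y" | "y < x" by fastforce
  then show ?thesis
  proof cases
    case 1 then show ?thesis using conn_lt assms by blast
  next
    case 2 then show ?thesis unfolding RR_def by simp
  next
    case 3 then show ?thesis using conn_lt[OF assms(1-3) assms(5,4)] RR_sym by blast
  qed
qed

lemma closed:
  assumes "partition_on X Q" "B \<in> Q" "x \<in> B" "(x,y) \<in> RR (arcs Q)"
  shows "y \<in> B"
  using assms(4) unfolding RR_def
proof (induction rule: rtrancl_induct)
  case base then show ?case using assms by simp
next
  case (step y z)
  then show ?case using arcs_block[OF assms(1) _ assms(2)] by blast
qed

lemma blk_eq: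
  assumes "partition_on X Q" "finite X" "B \<in> Q" "x \<in> B"
  shows "B = {y. (x,y) \<in> RR (arcs Q)}"
  using conn[OF assms] closed[OF assms(1,3,4)] by blast

lemma uniq_sub:
  assumes "finite X" "partition_on X Q1" "partition_on X Q2" "arcs Q1 = arcs Q2"
  shows "Q1 \<subseteq> Q2"
proof
  fix B assume B: "B \<in> Q1"
  then have "B \<noteq> {}" using assms(2) unfolding partition_on_def by auto
  then obtain x where x: "x \<in> B" by blast
  then have "x \<in> X" using B block_sub assms(2) by blast
  then obtain B' where B': "B' \<in> Q2" "x \<in> B'" using assms(3) unfolding partition_on_def by blast
  have "B = B'" using blk_eq[OF assms(2,1) B x] blk_eq[OF assms(3,1) B'] assms(4) by simp
  then show "B \<in> Q2" using B' by simp
qed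

lemma uniq:
  assumes "finite X" "partition_on X Q1" "partition_on X Q2" "arcs Q1 = arcs Q2"
  shows "Q1 = Q2"
  using uniq_sub[OF assms] uniq_sub[OF assms(1,3,2) assms(4)[symmetric]] by blast

lemma card_part:
  assumes P: "partition_on X Q" and fX: "finite X"
  shows "card X = card (arcs Q) + card Q"
proof -
  define N where "N = fst ` arcs Q"
  have injf: "inj_on fst (arcs Q)"
    by (intro inj_onI) (metis arcs_fun1[OF P] prod.collapse)
  have cN: "card N = card (arcs Q)" unfolding N_def using card_image[OF injf] .
  have NX: "N \<subseteq> X" unfolding N_def using arcs_sub[OF P] by auto
  have fB: "\<And>B. B \<in> Q \<Longrightarrow> finite B \<and> B \<noteq> {} \<and> B \<subseteq> X"
    using P fX block_sub finite_subset unfolding partition_on_def by metis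
  have "bij_betw Max Q (X - N)"
  proof (rule bij_betwI')
    fix B B' assume B: "B \<in> Q" "B' \<in> Q"
    show "(Max B = Max B') = (B = B')"
      using same_block[OF P B] fB[OF B(1)] fB[OF B(2)] Max_in by metis
  next
    fix B assume B: "B \<in> Q"
    have m: "Max B \<in> B" using fB[OF B] Max_in by blast
    have "Max B \<notin> N"
    proof
      assume "Max B \<in> N"
      then obtain j where j: "(Max B, j) \<in> arcs Q" unfolding N_def by force
      then have "j \<in> B" "Max B < j" using arcs_block[OF P j B] m arcs_lt by blast+
      then show False using fB[OF B] by (meson Max_ge leD)
    qed
    then show "Max B \<in> X - N" using m fB[OF B] by blast
  next
    fix i assume i: "i \<in> X - N"
    then obtain B where B: "B \<in> Q" "i \<in> B" using P unfolding partition_on_def by blast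
    have "\<forall>k\<in>B. k \<le> i"
    proof (rule ccontr)
      assume "\<not> (\<forall>k\<in>B. k \<le> i)"
      then obtain k where "k \<in> B" "i < k" by force
      then obtain j where "(i,j) \<in> arcs Q" using succ_exists[OF P fX B] by blast
      then show False using i unfolding N_def by force
    qed
    then have "i = Max B" using B fB[OF B(1)] by (intro Max_eqI[symmetric]) auto
    then show "\<exists>B\<in>Q. i = Max B" using B by blast
  qed
  then have "card Q = card (X - N)" by (rule bij_betw_same_card)
  moreover have "card X = card N + card (X - N)" using NX fX
    by (metis card_Diff_subset add.commute card_mono finite_subset le_add_diff_inverse2)
  ultimately show ?thesis using cN by simp
qed

lemma block_of_in:
  assumes "partition_on X P" "x \<in> X"
  shows "block_of P x \<in> P \<and> x \<in> block_of P x"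
proof -
  obtain B where B: "B \<in> P" "x \<in> B" using assms unfolding partition_on_def by blast
  have "\<exists>!B. B \<in> P \<and> x \<in> B" using B same_block[OF assms(1)] by blast
  then show ?thesis unfolding block_of_def by (rule theI')
qed

lemma nonmax:
  assumes "partition_on X P" "finite X" "B \<in> P" "x \<in> B"
  shows "x \<in> fst ` arcs P \<longleftrightarrow> (\<exists>k\<in>B. x < k)"
proof
  assume "x \<in> fst ` arcs P"
  then obtain j where j: "(x,j) \<in> arcs P" by force
  then show "\<exists>k\<in>B. x < k" using arcs_block[OF assms(1) j assms(3)] assms(4) arcs_lt by blast
next
  assume "\<exists>k\<in>B. x < k"
  then obtain k where "k \<in> B" "x < k" by blast
  then obtain j where "(x,j) \<in> arcs P" using succ_exists[OF assms] by blast
  then show "x \<in> fst ` arcs P" by force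
qed

lemma nonmin:
  assumes "partition_on X P" "finite X" "B \<in> P" "x \<in> B"
  shows "x \<in> snd ` arcs P \<longleftrightarrow> (\<exists>k\<in>B. k < x)"
proof
  assume "x \<in> snd ` arcs P"
  then obtain j where j: "(j,x) \<in> arcs P" by force
  then show "\<exists>k\<in>B. k < x" using arcs_block[OF assms(1) j assms(3)] assms(4) arcs_lt by blast
next
  assume "\<exists>k\<in>B. k < x"
  then obtain k where "k \<in> B" "k < x" by blast
  then obtain j where "(j,x) \<in> arcs P" using pred_exists[OF assms] by blast
  then show "x \<in> snd ` arcs P" by force
qed

lemma pm_eq: "pm n = {-int n..-1} \<union> {1..int n}"
  unfolding pm_def by auto

lemma pm_fin: "finite (pm n)" unfolding pm_eq by simp

lemma pm_card: "card (pm n) = 2 * n"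
proof -
  have "card (pm n) = card {-int n..-1} + card {1..int n}" unfolding pm_eq
    by (rule card_Un_disjoint) auto
  then show ?thesis by simp
qed

lemma main:
  fixes n :: nat and P :: "int set set"
  assumes n1: "n \<ge> 1" and PN: "P \<in> NCD n"
  defines "X \<equiv> pm n" and "A \<equiv> arcs P"
  shows "int (card (plus P)) + int (card P) = 2 * int n + 2 - (if -1 \<in> fst ` A then 2 else 0)"
proof -
  have P: "partition_on X P" and sym: "\<And>i j. (i, j) \<in> A \<longleftrightarrow> (-j, -i) \<in> A"
    and nc: "\<And>i j k l. (i, k) \<in> A \<Longrightarrow> (j, l) \<in> A \<Longrightarrow> i < j \<Longrightarrow> j < k \<Longrightarrow> k < l \<Longrightarrow> (i, k) = (-l, -j)"
    using PN unfolding NCD_def PiD_def X_def A_def by blast+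
  have fX: "finite X" unfolding X_def by (rule pm_fin)
  have UP: "\<Union>P = X" using P unfolding partition_on_def by blast
  define N where "N = fst ` A"
  define N' where "N' = snd ` A"
  define N2 where "N2 = {i. i + 1 \<in> N'}"
  define G where "G = {i. i \<in> X \<and> i + 1 \<in> X}"
  define Tg where "Tg = {i\<in>G. i \<notin> N \<and> i + 1 \<notin> N'}"
  define Sg where "Sg = {i. (i, i+1) \<in> A}"
  define sh where "sh = (\<lambda>i::int. (i, i+1))"
  have inj_sh: "inj sh" unfolding sh_def by (auto intro: injI)
  have AX: "A \<subseteq> X \<times> X" using arcs_sub[OF P] unfolding A_def by auto
  have fA: "finite A" using AX fX finite_subset by blast
  have NX: "N \<subseteq> X" "N' \<subseteq> X" using AX unfolding N_def N'_def by auto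
  have fN: "finite N" "finite N'" using NX fX finite_subset by auto
  have cN: "card N = card A"
    unfolding N_def by (rule card_image, intro inj_onI) (metis arcs_fun1[OF P] prod.collapse A_def)
  have cN': "card N' = card A"
    unfolding N'_def by (rule card_image, intro inj_onI) (metis arcs_fun2[OF P] prod.collapse A_def)
  have N2eq: "N2 = (\<lambda>x. x - 1) ` N'" unfolding N2_def by force
  have cN2: "card N2 = card A" unfolding N2eq using cN' by (simp add: card_image inj_on_def)
  have fN2: "finite N2" unfolding N2eq using fN by simp
  have fG: "finite G" unfolding G_def using fX by simp
  have nm: "\<And>x. x \<in> X \<Longrightarrow> x \<in> N \<longleftrightarrow> \<not> (\<forall>y\<in>block_of P x. y \<le> x)"
    using nonmax[OF P fX] block_of_in[OF P] unfolding N_def A_def by (meson not_le)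
  have nm': "\<And>x. x \<in> X \<Longrightarrow> x \<in> N' \<longleftrightarrow> \<not> (\<forall>y\<in>block_of P x. x \<le> y)"
    using nonmin[OF P fX] block_of_in[OF P] unfolding N'_def A_def by (meson not_le)
  have Teq: "T_set P = sh ` Tg"
    unfolding T_set_def Tg_def G_def sh_def UP using nm nm' by auto
  have key: "\<And>i. i \<in> G \<Longrightarrow> i \<in> N \<Longrightarrow> i + 1 \<in> N' \<Longrightarrow> (i, i+1) \<in> A"
  proof -
    fix i assume i: "i \<in> G" "i \<in> N" "i + 1 \<in> N'"
    obtain k where k: "(i,k) \<in> A" using i(2) unfolding N_def by force
    obtain j where j: "(j,i+1) \<in> A" using i(3) unfolding N'_def by force
    have ik: "i < k" "j < i + 1" using k j arcs_lt unfolding A_def by blast+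
    show "(i, i+1) \<in> A"
    proof (rule ccontr)
      assume c: "(i, i+1) \<notin> A"
      then have "k \<noteq> i + 1" "j \<noteq> i" using k j by auto
      then have "j < i" "i + 1 < k" using ik by auto
      then have "(j, i+1) = (-k, -i)" using nc[OF j k] by auto
      then have "2 * i + 1 = 0" by simp then show False by presburger
    qed
  qed
  have SgG: "Sg = {i\<in>G. i \<in> N \<and> i \<in> N2}"
  proof
    show "Sg \<subseteq> {i\<in>G. i \<in> N \<and> i \<in> N2}"
    proof
      fix i assume "i \<in> Sg"
      then have a: "(i,i+1) \<in> A" unfolding Sg_def by simp
      then have "i \<in> X" "i+1 \<in> X" using AX by auto
      then show "i \<in> {i\<in>G. i \<in> N \<and> i \<in> N2}" using a unfolding G_def N_def N2_def N'_def by force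
    qed
  next
    show "{i\<in>G. i \<in> N \<and> i \<in> N2} \<subseteq> Sg" using key unfolding Sg_def N2_def by blast
  qed
  have fSg: "finite Sg" using SgG fG by simp
  have fTg: "finite Tg" unfolding Tg_def using fG by simp
  define A' where "A' = (A - S_set) \<union> T_set P"
  have ASS: "A \<inter> S_set = sh ` Sg" unfolding S_set_def Sg_def sh_def by auto
  have TS: "T_set P \<subseteq> S_set" unfolding Teq S_set_def sh_def by auto
  have cA': "card A' = card A - card Sg + card Tg"
  proof -
    have "card A' = card (A - S_set) + card (T_set P)" unfolding A'_def
      using TS fA fTg Teq by (intro card_Un_disjoint) auto
    moreover have "card (A - S_set) = card A - card Sg"
    proof -
      have "A - S_set = A - (A \<inter> S_set)" by blast
      then have "card (A - S_set) = card A - card (A \<inter> S_set)"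
        using fA by (simp add: card_Diff_subset)
      then show ?thesis unfolding ASS using card_image[OF inj_on_subset[OF inj_sh]] by simp
    qed
    moreover have "card (T_set P) = card Tg" unfolding Teq using card_image[OF inj_on_subset[OF inj_sh]] by simp
    ultimately show ?thesis by simp
  qed
  have SgA: "card Sg \<le> card A"
  proof -
    have "sh ` Sg \<subseteq> A" using ASS by blast
    then have "card (sh ` Sg) \<le> card A" using fA card_mono by blast
    then show ?thesis using card_image[OF inj_on_subset[OF inj_sh]] by simp
  qed
  have TgN: "\<And>i. i \<in> Tg \<Longrightarrow> i \<in> X \<and> i + 1 \<in> X \<and> i \<notin> N \<and> i + 1 \<notin> N'"
    unfolding Tg_def G_def by blast
  have ex: "\<exists>Q. partition_on X Q \<and> arcs Q = A'"
  proof (rule exists_part[OF fX])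
    show "A' \<subseteq> X \<times> X" unfolding A'_def Teq sh_def using AX TgN by blast
    have "\<And>i j. (i,j) \<in> A \<Longrightarrow> i < j" using arcs_lt unfolding A_def by blast
    then show "\<forall>(i,j)\<in>A'. i < j" unfolding A'_def Teq sh_def by auto
    have f1: "\<And>i j j'. (i,j) \<in> A \<Longrightarrow> (i,j') \<in> A \<Longrightarrow> j = j'"
      using arcs_fun1[OF P] unfolding A_def by blast
    have f2: "\<And>i i' j. (i,j) \<in> A \<Longrightarrow> (i',j) \<in> A \<Longrightarrow> i = i'"
      using arcs_fun2[OF P] unfolding A_def by blast
    have c: "\<And>i k. (i,k) \<in> A' \<Longrightarrow> ((i,k) \<in> A \<and> i \<in> N \<and> k \<in> N') \<or> (i \<in> Tg \<and> k = i+1)"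
    proof -
      fix i k assume "(i,k) \<in> A'"
      then have "(i,k) \<in> A \<or> (i,k) \<in> sh ` Tg" unfolding A'_def Teq by blast
      then show "((i,k) \<in> A \<and> i \<in> N \<and> k \<in> N') \<or> (i \<in> Tg \<and> k = i+1)"
        unfolding sh_def N_def N'_def by force
    qed
    show "\<forall>i j j'. (i,j)\<in>A' \<longrightarrow> (i,j')\<in>A' \<longrightarrow> j=j'"
    proof (intro allI impI)
      fix i j j' assume h: "(i,j)\<in>A'" "(i,j')\<in>A'"
      show "j = j'" using c[OF h(1)] c[OF h(2)] f1 TgN by blast
    qed
    show "\<forall>i i' j. (i,j)\<in>A' \<longrightarrow> (i',j)\<in>A' \<longrightarrow> i=i'"
    proof (intro allI impI)
      fix i i' j assume h: "(i,j)\<in>A'" "(i',j)\<in>A'"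
      show "i = i'" using c[OF h(1)] c[OF h(2)] f2 TgN by (metis add_right_cancel)
    qed
  qed
  have eq: "(arcs P - S_set) \<union> T_set P = A'" unfolding A'_def A_def ..
  obtain Q where Q: "partition_on X Q" "arcs Q = A'" using ex by blast
  have ex1: "\<exists>!Q. partition_on X Q \<and> arcs Q = A'"
  proof (rule ex1I[of _ Q])
    show "partition_on X Q \<and> arcs Q = A'" using Q by blast
  next
    fix Q' assume "partition_on X Q' \<and> arcs Q' = A'"
    then show "Q' = Q" using uniq[OF fX, of Q' Q] Q by simp
  qed
  have pl: "partition_on X (plus P) \<and> arcs (plus P) = A'"
    unfolding plus_def UP eq by (rule theI'[OF ex1])
  have c1: "card X = card A' + card (plus P)" using card_part[OF conjunct1[OF pl] fX] conjunct2[OF pl] by simp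
  have c2: "card X = card A + card P" using card_part[OF P fX] unfolding A_def .
  have cX: "card X = 2 * n" unfolding X_def by (rule pm_card)
  have cG: "card G = 2 * n - 2"
  proof -
    have "G = {-int n..-2} \<union> {1..int n - 1}" unfolding G_def X_def pm_def by auto
    moreover have "card ({-int n..-2} \<union> {1..int n - 1}) = card {-int n..-2} + card {1..int n - 1}"
      by (rule card_Un_disjoint) auto
    ultimately show ?thesis using n1 by simp
  qed
  have eN: "N - G = N \<inter> {-1}"
  proof -
    have "int n \<notin> N"
    proof
      assume "int n \<in> N"
      then obtain j where "(int n, j) \<in> A" unfolding N_def by force
      then have "j \<in> X" "int n < j" using AX arcs_lt unfolding A_def by blast+
      then show False unfolding X_def pm_def by auto
    qed
    moreover have "\<And>x. x \<in> X \<Longrightarrow> x \<notin> G \<Longrightarrow> x = -1 \<or> x = int n" unfolding G_def X_def pm_def by auto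
    moreover have "-1 \<notin> G" unfolding G_def X_def pm_def by auto
    ultimately show ?thesis using NX by auto
  qed
  have eN2: "N2 - G = N2 \<inter> {0}"
  proof -
    have "- int n \<notin> N'"
    proof
      assume "- int n \<in> N'"
      then obtain j where "(j, - int n) \<in> A" unfolding N'_def by force
      then have "j \<in> X" "j < - int n" using AX arcs_lt unfolding A_def by blast+
      then show False unfolding X_def pm_def by auto
    qed
    moreover have h: "\<And>x. x + 1 \<in> X \<Longrightarrow> x \<notin> G \<Longrightarrow> x = 0 \<or> x + 1 = - int n" unfolding G_def X_def pm_def by auto
    moreover have "0 \<notin> G" unfolding G_def X_def pm_def by auto
    moreover have "\<And>x. x \<in> N2 \<Longrightarrow> x \<notin> G \<Longrightarrow> x = 0"
    proof -
      fix x assume x: "x \<in> N2" "x \<notin> G"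
      then have "x + 1 \<in> N'" unfolding N2_def by simp
      then have "x + 1 \<in> X" "x + 1 \<noteq> - int n" using NX \<open>- int n \<notin> N'\<close> by auto
      then show "x = 0" using h x(2) by blast
    qed
    ultimately show ?thesis by auto
  qed
  have sy: "0 \<in> N2 \<longleftrightarrow> -1 \<in> N"
  proof -
    have "0 \<in> N2 \<longleftrightarrow> (\<exists>j. (j, 1) \<in> A)" unfolding N2_def N'_def by force
    also have "\<dots> \<longleftrightarrow> (\<exists>j. (-1, -j) \<in> A)" using sym by auto
    also have "\<dots> \<longleftrightarrow> (\<exists>j. (-1, j) \<in> A)" by (metis minus_minus)
    also have "\<dots> \<longleftrightarrow> -1 \<in> N" unfolding N_def by force
    finally show ?thesis .
  qed
  define e where "e = (if -1 \<in> N then 1 else 0 :: nat)"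
  have h1: "card N = card (N \<inter> G) + e"
  proof -
    have "card N = card (N \<inter> G) + card (N - G)" using card_Int_Diff[OF fN(1)] .
    moreover have "card (N - G) = e" unfolding eN e_def by auto
    ultimately show ?thesis by simp
  qed
  have h2: "card N2 = card (N2 \<inter> G) + e"
  proof -
    have "card N2 = card (N2 \<inter> G) + card (N2 - G)" using card_Int_Diff[OF fN2] .
    moreover have "card (N2 - G) = e" unfolding eN2 e_def using sy by auto
    ultimately show ?thesis by simp
  qed
  have h3: "card (N \<inter> G) + card (N2 \<inter> G) = card ((N \<inter> G) \<union> (N2 \<inter> G)) + card ((N \<inter> G) \<inter> (N2 \<inter> G))"
    using fG by (intro card_Un_Int) auto
  have h4: "(N \<inter> G) \<inter> (N2 \<inter> G) = Sg" unfolding SgG by auto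
  have h5: "(N \<inter> G) \<union> (N2 \<inter> G) = G - Tg" unfolding Tg_def N2_def by auto
  have h6: "card G = card (G - Tg) + card Tg"
  proof -
    have "Tg \<subseteq> G" unfolding Tg_def by blast
    then have "G - Tg \<union> Tg = G" "(G - Tg) \<inter> Tg = {}" by blast+
    then show ?thesis using card_Un_disjoint[of "G - Tg" Tg] fG fTg by simp
  qed
  have fin: "2 * card A + card Tg = card G + card Sg + 2 * e"
    using h1 h2 h3 h4 h5 h6 cN cN2 by simp
  have i1: "int (card (plus P)) = int (card X) - int (card A')" using c1 by simp
  have i2: "int (card P) = int (card X) - int (card A)" using c2 by simp
  have i3: "int (card A') = int (card A) - int (card Sg) + int (card Tg)" using cA' SgA by simp
  have i4: "2 * int (card A) + int (card Tg) = int (card G) + int (card Sg) + 2 * int e"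
    using fin by linarith
  have i5: "int (card G) = 2 * int n - 2" using cG n1 by simp
  have "int (card (plus P)) + int (card P) = 2 * int n + 2 - 2 * int e"
    using i1 i2 i3 i4 i5 cX by simp
  then show ?thesis unfolding e_def N_def by simp
qed

theorem corollary5p2:
  fixes n :: nat and P :: "int set set"
  assumes "n \<ge> 1" and "P \<in> NCD n"
  shows "((\<exists>B\<in>P. -1 \<in> B \<and> (\<forall>x\<in>B. x \<le> -1)) \<longrightarrow>
            int (card (plus P)) = 2 * int n + 2 - int (card P))
       \<and> (\<not> (\<exists>B\<in>P. -1 \<in> B \<and> (\<forall>x\<in>B. x \<le> -1)) \<longrightarrow>
            int (card (plus P)) = 2 * int n - int (card P))"
proof -
  have P: "partition_on (pm n) P" using assms(2) unfolding NCD_def PiD_def by blast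
  have m1: "-1 \<in> pm n" using assms(1) unfolding pm_def by auto
  obtain B where B: "B \<in> P" "-1 \<in> B" using P m1 unfolding partition_on_def by blast
  have C: "(\<exists>B\<in>P. -1 \<in> B \<and> (\<forall>x\<in>B. x \<le> -1)) \<longleftrightarrow> -1 \<notin> fst ` arcs P"
  proof
    assume "\<exists>B\<in>P. -1 \<in> B \<and> (\<forall>x\<in>B. x \<le> -1)"
    then obtain B' where "B' \<in> P" "-1 \<in> B'" "\<forall>x\<in>B'. x \<le> -1" by blast
    then show "-1 \<notin> fst ` arcs P" using nonmax[OF P pm_fin, of B' "-1"] by force
  next
    assume "-1 \<notin> fst ` arcs P"
    then have "\<forall>x\<in>B. x \<le> -1" using nonmax[OF P pm_fin B] by force
    then show "\<exists>B\<in>P. -1 \<in> B \<and> (\<forall>x\<in>B. x \<le> -1)" using B by blast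
  qed
  note M = main[OF assms]
  show ?thesis
  proof (cases "-1 \<in> fst ` arcs P")
    case True
    then have "int (card (plus P)) + int (card P) = 2 * int n" using M by simp
    then show ?thesis using C True by linarith
  next
    case False
    then have "int (card (plus P)) + int (card P) = 2 * int n + 2" using M by simp
    then show ?thesis using C False by linarith
  qed
qed

end
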